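(* Let $N=d\ge2$, $w>1$, let $\mathcal{G}$ be the causal graph on $[N]$, $W_Q=W_K=0$ (so $A_{ij}=1/i$ for $j\le i$ and $0$ otherwise), and let $W_V\in\mathbb{R}^{N\times N}$ have $1$ on the diagonal, $w$ on the superdiagonal and $0$ elsewhere. For signs $s_1,\dots,s_N\in\{\pm1\}$ define $X\in\mathbb{R}^{N\times N}$ row by row: $X_{1,:}=s_1e_N$, and for $k\ge2$, $X_{k,j}=-X_{k-1,j+1}/w$ for $1\le j\le N-1$ and $X_{k,N}=s_k\sqrt{1-1/w^2}$. Then each of these $2^N$ matrices is an equilibrium of the LayerNorm dynamics $X\mapsto DAXW_V$ (with $D=\mathrm{diag}(1/\|(AXW_V)_{i,:}\|_2)$), has unit-norm rows and rank $N$, and its stable rank satisfies $$1\le \mathrm{SRank}(X)=\frac{\|X\|_F^2}{\|X\|_2^2}\le\frac{N}{N-(N-1)/w^2}.$$ Consequently, for any $\delta>0$, choosing $w\ge\sqrt{1/\delta+1}$ gives $\mathrm{SRank}(X)\le 1+\delta$.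
   Context: $e_N$ is the $N$-th standard basis row vector of $\mathbb{R}^N$. The causal graph has edges $(j,i)$ for $j\le i$, meaning token $i$ attends to tokens $1,\dots,i$. An equilibrium is a fixed point of the update map. $\|\cdot\|_F$ is the Frobenius norm and $\|\cdot\|_2$ the spectral norm. *)

theory Defs
  imports Complex_Main "Jordan_Normal_Form.DL_Rank"
begin

text \<open>N x N real matrices are represented as functions nat => nat => real,
  with indices ranging over {1..N} (1-based, as in the paper); values outside
  this range are irrelevant.\<close>

type_synonym rmat = "nat \<Rightarrow> nat \<Rightarrow> real"

definition matmul :: "nat \<Rightarrow> rmat \<Rightarrow> rmat \<Rightarrow> rmat" where
  "matmul N P Q = (\<lambda>i j. \<Sum>l=1..N. P i l * Q l j)"

definition causal_attn :: "nat \<Rightarrow> rmat" where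
  "causal_attn N = (\<lambda>i j. if j \<le> i then 1 / real i else 0)"

definition WV :: "real \<Rightarrow> rmat" where
  "WV w = (\<lambda>i j. if j = i then 1 else if j = i + 1 then w else 0)"

definition row_norm :: "nat \<Rightarrow> rmat \<Rightarrow> nat \<Rightarrow> real" where
  "row_norm N M i = sqrt (\<Sum>j=1..N. (M i j)\<^sup>2)"

definition layernorm_update :: "nat \<Rightarrow> rmat \<Rightarrow> rmat \<Rightarrow> rmat \<Rightarrow> rmat" where
  "layernorm_update N A W X =
     (let Y = matmul N (matmul N A X) W in (\<lambda>i j. Y i j / row_norm N Y i))"

definition is_equilibrium :: "nat \<Rightarrow> rmat \<Rightarrow> rmat \<Rightarrow> rmat \<Rightarrow> bool" where
  "is_equilibrium N A W X \<longleftrightarrow>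
     (\<forall>i\<in>{1..N}. \<forall>j\<in>{1..N}. layernorm_update N A W X i j = X i j)"

definition frob_norm :: "nat \<Rightarrow> rmat \<Rightarrow> real" where
  "frob_norm N M = sqrt (\<Sum>i=1..N. \<Sum>j=1..N. (M i j)\<^sup>2)"

definition spec_norm :: "nat \<Rightarrow> rmat \<Rightarrow> real" where
  "spec_norm N M = Sup {sqrt (\<Sum>i=1..N. (\<Sum>j=1..N. M i j * v j)\<^sup>2) | v.
                          (\<Sum>j=1..N. (v j)\<^sup>2) = 1}"

definition stable_rank :: "nat \<Rightarrow> rmat \<Rightarrow> real" where
  "stable_rank N M = (frob_norm N M)\<^sup>2 / (spec_norm N M)\<^sup>2"

definition to_mat :: "nat \<Rightarrow> rmat \<Rightarrow> real mat" where
  "to_mat N M = mat N N (\<lambda>(i, j). M (i + 1) (j + 1))"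

definition mat_rank :: "nat \<Rightarrow> rmat \<Rightarrow> nat" where
  "mat_rank N M = vec_space.rank N (to_mat N M)"

fun Xcons :: "nat \<Rightarrow> real \<Rightarrow> (nat \<Rightarrow> real) \<Rightarrow> nat \<Rightarrow> nat \<Rightarrow> real" where
  "Xcons N w s 0 j = 0"
| "Xcons N w s (Suc 0) j = (if j = N then s 1 else 0)"
| "Xcons N w s (Suc (Suc k)) j =
     (if j = N then s (Suc (Suc k)) * sqrt (1 - 1 / w\<^sup>2)
      else if 1 \<le> j \<and> j \<le> N - 1 then - Xcons N w s (Suc k) (j + 1) / w
      else 0)"

end

theory Submission
  imports Defs "HOL-Analysis.Convex"
begin

lemma X_supp: "k + j \<le> N \<Longrightarrow> Xcons N w s k j = 0"
proof (induction k arbitrary: j rule: less_induct)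
  case (less k)
  show ?case
  proof (cases k)
    case 0 then show ?thesis by simp
  next
    case (Suc k')
    show ?thesis
    proof (cases k')
      case 0 with Suc less.prems show ?thesis by simp
    next
      case (Suc k'')
      have "Xcons N w s (Suc k'') (j + 1) = 0"
        using less.IH[of "Suc k''" "j+1"] less.prems \<open>k = Suc k'\<close> Suc by simp
      then show ?thesis using less.prems \<open>k = Suc k'\<close> Suc by simp
    qed
  qed
qed

lemma X_antidiag:
  assumes "1 \<le> k" "k \<le> N"
  shows "Xcons N w s k (N + 1 - k) = (- 1 / w) ^ (k - 1) * s 1"
  using assms
proof (induction k rule: less_induct)
  case (less k)
  show ?case
  proof (cases "k = 1")
    case True then show ?thesis by simp
  next
    case False
    then obtain k' where k: "k = Suc (Suc k')" using less.prems
      by (metis One_nat_def Suc_le_D le_SucE le_zero_eq not0_implies_Suc)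
    have IH: "Xcons N w s (Suc k') (N - k') = (- 1 / w) ^ k' * s 1"
      using less.IH[of "Suc k'"] k less.prems by (simp add: Suc_diff_le)
    have "N + 1 - k \<noteq> N" "1 \<le> N + 1 - k" "N + 1 - k \<le> N - 1" using k less.prems by auto
    then have "Xcons N w s k (N + 1 - k) = - Xcons N w s (Suc k') (N + 1 - k + 1) / w"
      using k by simp
    also have "N + 1 - k + 1 = N - k'" using k less.prems by auto
    finally show ?thesis using IH k by simp
  qed
qed

lemma X_rownorm_sq:
  assumes w: "w > 1" and s: "\<forall>k\<in>{1..N}. s k = 1 \<or> s k = -1" and k: "1 \<le> k" "k \<le> N"
  shows "(\<Sum>j=1..N. (Xcons N w s k j)\<^sup>2) = 1"
  using k
proof (induction k rule: less_induct)
  case (less k)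
  have sq: "\<And>k. k \<in> {1..N} \<Longrightarrow> (s k)\<^sup>2 = 1"
  proof -
    fix k assume "k \<in> {1..N}"
    then have "s k = 1 \<or> s k = -1" using s by blast
    then show "(s k)\<^sup>2 = 1" by auto
  qed
  show ?case
  proof (cases "k = 1")
    case True
    have "(\<Sum>j=1..N. (Xcons N w s k j)\<^sup>2) = (\<Sum>j=1..N. if j = N then (s 1)\<^sup>2 else 0)"
      by (rule sum.cong) (use True in auto)
    then show ?thesis using sq[of 1] less.prems by simp
  next
    case False
    then obtain k' where k: "k = Suc (Suc k')" using less.prems
      by (metis One_nat_def Suc_le_D not0_implies_Suc)
    have IH: "(\<Sum>j=1..N. (Xcons N w s (Suc k') j)\<^sup>2) = 1"
      using less.IH[of "Suc k'"] k less.prems by simp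
    define g where "g j = (Xcons N w s (Suc k') j)\<^sup>2" for j
    have N1: "N = Suc (N - 1)" using less.prems k by simp
    have "{1..N} = insert N {1..N-1}" using less.prems k by auto
    then have "(\<Sum>j=1..N. (Xcons N w s k j)\<^sup>2) = (Xcons N w s k N)\<^sup>2 + (\<Sum>j=1..N-1. (Xcons N w s k j)\<^sup>2)"
      unfolding \<open>{1..N} = insert N {1..N-1}\<close> using less.prems by (subst sum.insert) auto
    also have "(\<Sum>j=1..N-1. (Xcons N w s k j)\<^sup>2) = (\<Sum>j=1..N-1. g (Suc j) / w\<^sup>2)"
      by (rule sum.cong) (auto simp: k g_def power_divide)
    also have "\<dots> = (\<Sum>j=Suc 1..Suc (N-1). g j) / w\<^sup>2"
      by (simp only: sum.shift_bounds_cl_Suc_ivl sum_divide_distrib)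
    also have "(\<Sum>j=Suc 1..Suc (N-1). g j) = (\<Sum>j=1..N. g j) - g 1"
      using sum.atLeast_Suc_atMost[of 1 N g] less.prems k N1 by simp
    also have "g 1 = 0" unfolding g_def using X_supp[of "Suc k'" 1 N w s] less.prems k by simp
    also have "(\<Sum>j=1..N. g j) = 1" using IH g_def by simp
    also have "(Xcons N w s k N)\<^sup>2 = (s k)\<^sup>2 * (1 - 1/w\<^sup>2)"
      using k w by (simp add: power_mult_distrib)
    also have "(s k)\<^sup>2 = 1" using sq less.prems by simp
    finally show ?thesis using w by simp
  qed
qed

lemma matmul_assoc: "matmul N (matmul N P Q) R = matmul N P (matmul N Q R)"
  unfolding matmul_def
  by (auto simp: sum_distrib_left sum_distrib_right mult.assoc intro!: ext sum.swap[THEN trans])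

lemma matmul_WV:
  assumes "1 \<le> j" "j \<le> N"
  shows "matmul N M (WV w) l j = M l j + (if 2 \<le> j then w * M l (j - 1) else 0)"
proof -
  have "matmul N M (WV w) l j = (\<Sum>m=1..N. (if m = j then M l m else 0) + (if 2 \<le> j \<and> m = j - 1 then w * M l m else 0))"
    unfolding matmul_def WV_def by (rule sum.cong) auto
  also have "\<dots> = M l j + (if 2 \<le> j then w * M l (j - 1) else 0)"
    using assms by (auto simp: sum.distrib)
  finally show ?thesis .
qed

lemma Z_diff:
  assumes "w \<noteq> 0" "1 \<le> l" "l \<le> N" "1 \<le> j" "j \<le> N"
  shows "matmul N (Xcons N w s) (WV w) l j = Xcons N w s l j - Xcons N w s (l - 1) j"
proof (cases "l = 1")
  case True
  then show ?thesis using assms by (auto simp add: matmul_WV)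
next
  case False
  then obtain k' where k: "l = Suc (Suc k')" using assms
    by (metis One_nat_def Suc_le_D not0_implies_Suc)
  show ?thesis
  proof (cases "2 \<le> j")
    case True
    have "Xcons N w s l (j - 1) = - Xcons N w s (Suc k') j / w"
      using k True assms by auto
    then show ?thesis using assms True k by (simp add: matmul_WV)
  next
    case False
    then have "j = 1" using assms by simp
    then have "Xcons N w s (Suc k') j = 0" using X_supp[of "Suc k'" j N] k assms by simp
    then show ?thesis using assms False k by (simp add: matmul_WV)
  qed
qed

lemma Z_tele:
  assumes "i \<le> N" "1 \<le> j" "j \<le> N"
    and w0: "w \<noteq> 0"
  shows "(\<Sum>l=1..i. matmul N (Xcons N w s) (WV w) l j) = Xcons N w s i j"
  using assms(1)
proof (induction i)
  case 0 then show ?case by simp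
next
  case (Suc i)
  then show ?case using Z_diff[of w "Suc i" N j s] assms w0 by simp
qed

lemma Y_eq:
  assumes "1 \<le> i" "i \<le> N" "1 \<le> j" "j \<le> N" "w \<noteq> 0"
  shows "matmul N (matmul N (causal_attn N) (Xcons N w s)) (WV w) i j = Xcons N w s i j / real i"
proof -
  let ?Z = "matmul N (Xcons N w s) (WV w)"
  have "matmul N (matmul N (causal_attn N) (Xcons N w s)) (WV w) i j
      = (\<Sum>l=1..N. causal_attn N i l * ?Z l j)"
    by (simp only: matmul_assoc) (simp add: matmul_def)
  also have "\<dots> = (\<Sum>l=1..i. causal_attn N i l * ?Z l j)"
    using assms by (intro sum.mono_neutral_right) (auto simp: causal_attn_def)
  also have "\<dots> = (\<Sum>l=1..i. ?Z l j) / real i"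
    by (simp add: causal_attn_def sum_divide_distrib)
  also have "\<dots> = Xcons N w s i j / real i" using Z_tele assms by simp
  finally show ?thesis .
qed

lemma rank_full:
  assumes N: "N \<ge> 1" and w: "w \<noteq> 0" and s1: "s 1 \<noteq> 0"
  shows "mat_rank N (Xcons N w s) = N"
proof -
  let ?X = "Xcons N w s"
  let ?A = "to_mat N ?X"
  define R :: "real mat" where "R = mat N N (\<lambda>(i,j). if i + j = N - 1 then 1 else 0)"
  have A: "?A \<in> carrier_mat N N" by (simp add: to_mat_def)
  have R: "R \<in> carrier_mat N N" by (simp add: R_def)
  have B: "(?A * R) $$ (i,k) = ?X (i+1) (N-k)" if "i < N" "k < N" for i k
  proof -
    have "(?A * R) $$ (i,k) = (\<Sum>j\<in>{0..<N}. ?X (i+1) (j+1) * (if j + k = N - 1 then 1 else 0))"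
      using that by (simp add: to_mat_def R_def scalar_prod_def)
    also have "\<dots> = (\<Sum>j\<in>{0..<N}. if j = N - 1 - k then ?X (i+1) (j+1) else 0)"
      using that by (intro sum.cong) auto
    also have "\<dots> = ?X (i+1) (N-1-k+1)" using that by simp
    also have "N-1-k+1 = N-k" using that by simp
    finally show ?thesis .
  qed
  have BC: "?A * R \<in> carrier_mat N N" using A R by simp
  have lt: "(?A * R) $$ (i,k) = 0" if "i < k" "k < N" for i k
    using B[of i k] that X_supp[of "i+1" "N-k" N w s] by simp
  have "det (?A * R) = prod_list (diag_mat (?A * R))"
    by (rule det_lower_triangular[OF lt BC])
  also have "\<dots> \<noteq> 0"
  proof -
    have "\<forall>x\<in>set (diag_mat (?A * R)). x \<noteq> 0"
    proof
      fix x assume "x \<in> set (diag_mat (?A * R))"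
      then obtain i where i: "i < N" "x = (?A * R) $$ (i,i)" using BC by (auto simp: diag_mat_def)
      then have "x = ?X (i+1) (N + 1 - (i+1))" using B[of i i] by simp
      also have "\<dots> = (- 1 / w) ^ i * s 1" using X_antidiag[of "i+1" N w s] i by simp
      finally show "x \<noteq> 0" using w s1 by simp
    qed
    then show ?thesis by (auto simp add: prod_list_zero_iff)
  qed
  finally have "det ?A \<noteq> 0" using det_mult[OF A R] by simp
  then show ?thesis unfolding mat_rank_def using vec_space.det_rank_iff[OF A] by simp
qed

theorem mainTheorem14:
  fixes N :: nat and w :: real and s :: "nat \<Rightarrow> real"
  assumes N: "N \<ge> 2"
    and w: "w > 1"
    and s: "\<forall>k\<in>{1..N}. s k = 1 \<or> s k = -1"
  defines "X \<equiv> Xcons N w s"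
  shows "is_equilibrium N (causal_attn N) (WV w) X
       \<and> (\<forall>i\<in>{1..N}. row_norm N X i = 1)
       \<and> mat_rank N X = N
       \<and> 1 \<le> stable_rank N X
       \<and> stable_rank N X \<le> real N / (real N - (real N - 1) / w\<^sup>2)
       \<and> (\<forall>\<delta>>0. w \<ge> sqrt (1 / \<delta> + 1) \<longrightarrow> stable_rank N X \<le> 1 + \<delta>)"
proof -
  have w0: "w \<noteq> 0" using w by simp
  have sq: "(s k)\<^sup>2 = 1" if "k \<in> {1..N}" for k
  proof -
    have "s k = 1 \<or> s k = -1" using s that by blast
    then show ?thesis by auto
  qed
  have s1: "s 1 \<noteq> 0" using sq[of 1] N by auto
  have rn2: "(\<Sum>j=1..N. (X i j)\<^sup>2) = 1" if "i \<in> {1..N}" for i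
    using X_rownorm_sq[OF w s] that unfolding X_def by auto
  have rn: "\<forall>i\<in>{1..N}. row_norm N X i = 1"
    using rn2 by (simp add: row_norm_def)
  have eq: "is_equilibrium N (causal_attn N) (WV w) X"
    unfolding is_equilibrium_def
  proof (intro ballI)
    fix i j assume i: "i \<in> {1..N}" and j: "j \<in> {1..N}"
    let ?Y = "matmul N (matmul N (causal_attn N) X) (WV w)"
    have Y: "?Y i j' = X i j' / real i" if "j' \<in> {1..N}" for j'
      using Y_eq[of i N j' w s] i that w0 unfolding X_def by auto
    have "row_norm N ?Y i = sqrt (\<Sum>j'=1..N. (X i j' / real i)\<^sup>2)"
      unfolding row_norm_def using Y by (intro arg_cong[where f=sqrt] sum.cong) auto
    also have "(\<Sum>j'=1..N. (X i j' / real i)\<^sup>2) = (\<Sum>j'=1..N. (X i j')\<^sup>2) / (real i)\<^sup>2"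
      by (simp add: power_divide sum_divide_distrib)
    also have "\<dots> = 1 / (real i)\<^sup>2" using rn2 i by simp
    also have "sqrt (1 / (real i)\<^sup>2) = 1 / real i" by (simp add: real_sqrt_divide)
    finally have "row_norm N ?Y i = 1 / real i" .
    then show "layernorm_update N (causal_attn N) (WV w) X i j = X i j"
      unfolding layernorm_update_def Let_def using Y[OF j] i by simp
  qed
  have rk: "mat_rank N X = N" unfolding X_def using rank_full[of N w s] N w0 s1 by simp
  have frob: "(frob_norm N X)\<^sup>2 = real N"
  proof -
    have "(\<Sum>i=1..N. \<Sum>j=1..N. (X i j)\<^sup>2) = (\<Sum>i=1..N. (1::real))"
      using rn2 by (intro sum.cong) auto
    then show ?thesis unfolding frob_norm_def by (simp add: sum_nonneg)
  qed
  define S where "S = {sqrt (\<Sum>i=1..N. (\<Sum>j=1..N. X i j * v j)\<^sup>2) | v.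
                          (\<Sum>j=1..N. (v j)\<^sup>2) = 1}"
  define L where "L = real N - (real N - 1) / w\<^sup>2"
  have spec_def': "spec_norm N X = Sup S" unfolding spec_norm_def S_def by simp
  have ub: "x \<le> sqrt (real N)" if "x \<in> S" for x
  proof -
    obtain v where v: "(\<Sum>j=1..N. (v j)\<^sup>2) = 1"
      and x: "x = sqrt (\<Sum>i=1..N. (\<Sum>j=1..N. X i j * v j)\<^sup>2)"
      using \<open>x \<in> S\<close> unfolding S_def by blast
    have "(\<Sum>i=1..N. (\<Sum>j=1..N. X i j * v j)\<^sup>2) \<le> (\<Sum>i=1..N. (1::real))"
    proof (rule sum_mono)
      fix i assume "i \<in> {1..N}"
      then show "(\<Sum>j=1..N. X i j * v j)\<^sup>2 \<le> 1"
        using Cauchy_Schwarz_ineq_sum[of "X i" v "{1..N}"] rn2 v by simp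
    qed
    then show ?thesis using x by simp
  qed
  define e where "e = (\<lambda>j::nat. if j = N then (1::real) else 0)"
  have colN: "(\<Sum>i=1..N. (X i N)\<^sup>2) = L"
  proof -
    have ins: "{1..N} = insert 1 {2..N}" using N by auto
    have "(\<Sum>i=2..N. (X i N)\<^sup>2) = (\<Sum>i=2..N. 1 - 1 / w\<^sup>2)"
    proof (rule sum.cong)
      fix i assume i: "i \<in> {2..N}"
      then obtain k where k: "i = Suc (Suc k)" by (metis atLeastAtMost_iff add_2_eq_Suc le_Suc_ex)
      have "(X i N)\<^sup>2 = (s i)\<^sup>2 * (sqrt (1 - 1/w\<^sup>2))\<^sup>2"
        unfolding X_def k by (simp add: power_mult_distrib)
      also have "(s i)\<^sup>2 = 1" using sq i by simp
      also have "(sqrt (1 - 1/w\<^sup>2))\<^sup>2 = 1 - 1/w\<^sup>2" using w by simp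
      finally show "(X i N)\<^sup>2 = 1 - 1 / w\<^sup>2" by simp
    qed simp
    moreover have "(X 1 N)\<^sup>2 = 1" using sq[of 1] N unfolding X_def by simp
    ultimately have "(\<Sum>i=1..N. (X i N)\<^sup>2) = 1 + real (N - 1) * (1 - 1 / w\<^sup>2)"
      unfolding ins by (subst sum.insert) auto
    also have "\<dots> = L" unfolding L_def using N by (simp add: of_nat_diff algebra_simps)
    finally show ?thesis .
  qed
  have eS: "sqrt L \<in> S"
  proof -
    have "(\<Sum>j=1..N. (e j)\<^sup>2) = (\<Sum>j=1..N. if j = N then 1 else 0)"
      unfolding e_def by (intro sum.cong) auto
    then have "(\<Sum>j=1..N. (e j)\<^sup>2) = 1" using N by simp
    moreover have "(\<Sum>i=1..N. (\<Sum>j=1..N. X i j * e j)\<^sup>2) = L"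
    proof -
      have "(\<Sum>j=1..N. X i j * e j) = X i N" for i
        using N unfolding e_def by (simp add: if_distrib cong: if_cong)
      then show ?thesis using colN by simp
    qed
    ultimately show ?thesis unfolding S_def by force
  qed
  have L1: "L \<ge> 1"
  proof -
    have "L = 1 + real (N - 1) * (1 - 1 / w\<^sup>2)" unfolding L_def using N by (simp add: of_nat_diff algebra_simps)
    moreover have "1 / w\<^sup>2 \<le> 1" using w by (simp add: divide_le_eq_1 abs_square_le_1)
    ultimately show ?thesis by simp
  qed
  have bdd: "bdd_above S" using ub by (rule bdd_aboveI)
  have lo: "sqrt L \<le> spec_norm N X" unfolding spec_def' by (rule cSup_upper[OF eS bdd])
  have hi: "spec_norm N X \<le> sqrt (real N)" unfolding spec_def' using eS ub by (intro cSup_least) auto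
  have lo2: "L \<le> (spec_norm N X)\<^sup>2"
    using lo L1 by (metis dual_order.trans real_sqrt_ge_0_iff real_sqrt_pow2 power_mono zero_le_one)
  have hi2: "(spec_norm N X)\<^sup>2 \<le> real N"
    using hi lo L1 by (metis order_trans real_sqrt_ge_0_iff real_sqrt_pow2 power_mono of_nat_0_le_iff zero_le_one)
  have pos: "(spec_norm N X)\<^sup>2 > 0" using lo2 L1 by linarith
  have sr: "stable_rank N X = real N / (spec_norm N X)\<^sup>2" unfolding stable_rank_def frob by simp
  have A1: "1 \<le> stable_rank N X" unfolding sr using hi2 pos by simp
  have A2: "stable_rank N X \<le> real N / L" unfolding sr using lo2 L1 pos
    by (intro divide_left_mono) auto
  have A3: "real N / L \<le> 1 + \<delta>" if d: "\<delta> > 0" "w \<ge> sqrt (1 / \<delta> + 1)" for \<delta>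
  proof -
    have "(sqrt (1 / \<delta> + 1))\<^sup>2 \<le> w\<^sup>2" using d by (intro power_mono) auto
    then have w2: "1 / \<delta> + 1 \<le> w\<^sup>2" using d by (simp add: add_pos_pos)
    have t: "1 / w\<^sup>2 \<le> \<delta> / (1 + \<delta>)"
    proof -
      have "1 / w\<^sup>2 \<le> 1 / (1 / \<delta> + 1)" using w2 d w by (intro divide_left_mono) (auto simp: add_pos_pos)
      also have "1 / (1 / \<delta> + 1) = \<delta> / (1 + \<delta>)" using d by (simp add: field_simps)
      finally show ?thesis .
    qed
    have "(1 + \<delta>) * ((real N - 1) * (1 / w\<^sup>2)) \<le> (1 + \<delta>) * ((real N - 1) * (\<delta> / (1 + \<delta>)))"
      using t d N by (intro mult_left_mono) auto
    also have "\<dots> = (real N - 1) * \<delta>" using d by (simp add: field_simps)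
    finally have key: "(1 + \<delta>) * ((real N - 1) / w\<^sup>2) \<le> (real N - 1) * \<delta>" by simp
    have "real N \<le> (1 + \<delta>) * L" unfolding L_def using key d by (simp add: algebra_simps)
    then show ?thesis using L1 by (simp add: divide_le_eq mult.commute)
  qed
  show ?thesis using eq rn rk A1 A2 A3 unfolding L_def
    by (meson order_trans)
qed

end
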